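(* Let $p$ be a prime and $b$ an integer with $0<b<\frac{p-1}{2}$. Then $(p-b)(p-b^{-1})=2p+1$ if and only if $\frac{p-1}{3}\in\mathbb{Z}$ and $b=\frac{p-1}{3}$.
   Context: $b^{-1}$ is the unique integer $0<b^{-1}<p$ with $bb^{-1}\equiv1\pmod p$. *)

theory Defs
  imports "HOL-Number_Theory.Number_Theory"
begin

definition inv_mod :: "int \<Rightarrow> int \<Rightarrow> int" where
  "inv_mod p b = (THE c. 0 < c \<and> c < p \<and> [b * c = 1] (mod p))"

end

theory Submission
  imports Defs
begin

lemma inv_eq:
  fixes p b d :: int
  assumes "prime p" "0 < b" "b < p" "0 < d" "d < p" "[b * d = 1] (mod p)"
  shows "inv_mod p b = d"
  unfolding inv_mod_def
proof (rule the_equality)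
  show "0 < d \<and> d < p \<and> [b * d = 1] (mod p)" using assms by auto
next
  fix c assume c: "0 < c \<and> c < p \<and> [b * c = 1] (mod p)"
  then have "[b * c = b * d] (mod p)" using assms(6) by (meson cong_sym cong_trans)
  then have "p dvd b * (c - d)" by (simp add: cong_iff_dvd_diff right_diff_distrib dvd_diff_commute)
  moreover have "\<not> p dvd b" using assms by (auto dest: zdvd_imp_le)
  ultimately have "p dvd (c - d)" using assms(1) prime_dvd_mult_iff by blast
  then obtain k where k: "c - d = p * k" by (auto elim: dvdE)
  have "k = 0"
  proof (rule ccontr)
    assume "k \<noteq> 0"
    then have "\<bar>p * k\<bar> \<ge> p" using assms c by (simp add: abs_mult)
    then show False using k c assms by linarith
  qed
  then show "c = d" using k by simp
qed

theorem lemma5p3: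
  fixes p b :: int
  assumes "prime p" and "0 < b" and "real_of_int b < (real_of_int p - 1) / 2"
  shows "(p - b) * (p - inv_mod p b) = 2 * p + 1 \<longleftrightarrow>
           (3 dvd (p - 1) \<and> b = (p - 1) div 3)"
proof
  have "real_of_int (2 * b) < real_of_int (p - 1)" using assms(3) by simp
  then have hb: "2 * b < p - 1" by linarith
  assume h: "(p - b) * (p - inv_mod p b) = 2 * p + 1"
  define x where "x = p - b"
  define y where "y = p - inv_mod p b"
  have xy: "x * y = 2 * p + 1" using h x_def y_def by simp
  have x: "2 * x > p + 1" using hb x_def by simp
  have "y > 0"
  proof (rule ccontr)
    assume "\<not> y > 0"
    then have "x * y \<le> 0" using x assms(2) hb by (simp add: mult_nonneg_nonpos)
    then show False using xy hb assms(2) by linarith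
  qed
  moreover have "y < 4"
  proof (rule ccontr)
    assume "\<not> y < 4"
    then have "x * y \<ge> x * 4" using x hb assms(2) by (intro mult_left_mono) auto
    then show False using xy x by linarith
  qed
  ultimately have "y = 1 \<or> y = 2 \<or> y = 3" by auto
  moreover have "y \<noteq> 1" using xy x_def assms(2) hb by auto
  moreover have "y \<noteq> 2"
  proof
    assume "y = 2"
    then have "2 * x = 2 * p + 1" using xy by (simp add: mult.commute)
    then show False by presburger
  qed
  ultimately have "y = 3" by auto
  then have "p = 3 * b + 1" using xy x_def by simp
  then show "3 dvd (p - 1) \<and> b = (p - 1) div 3" by simp
next
  assume h: "3 dvd (p - 1) \<and> b = (p - 1) div 3"
  then have p: "p = 3 * b + 1" by auto
  have "[b * (3 * b - 2) = 1] (mod p)"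
  proof -
    have "b * (3 * b - 2) - 1 = p * (b - 1)" using p by (simp add: algebra_simps)
    then show ?thesis by (simp add: cong_iff_dvd_diff dvd_diff_commute)
  qed
  then have "inv_mod p b = 3 * b - 2" using assms(1,2) p by (intro inv_eq) auto
  then show "(p - b) * (p - inv_mod p b) = 2 * p + 1" using p by simp
qed

end
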